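(* Let $a,N$ be integers with $1\le a\le N$. For any $n,d\in\mathbb{N}_0$, $c_1,\dots,c_d\in\mathbb{N}\setminus\{2\}$ and $b_0,\dots,b_d\in\mathbb{N}_0$, $${}_nt^{\star}_{N,a}(\{2\}^{b_0},c_1,\{2\}^{b_1},\dots,c_d,\{2\}^{b_d})=\sum_{n\ge k_0\ge k_1\ge\cdots\ge k_d\ge0}\frac{N\left[\left(\frac{a}{N}\right)_{n+1}\right]^2}{(n-k_0)!\left(\frac{2a}{N}\right)_{n+k_0+1}}\cdot\frac{\left(\frac{2a}{N}\right)_{k_d}}{k_d!(Nk_d+a)}\prod_{i=0}^{d}\frac{(-1)^{k_i\delta_i}}{(Nk_i+a)^{2b_i+3-\delta_i}}W_{k_{i-1},k_i}^{\#}(\{1\}^{c_i-3}),$$ where $k_{-1}=-1$, $c_0=1$, $c_{d+1}=0$ and $\delta_i=\delta(c_i)+\delta(c_{i+1})$.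
   Context: $(x)_m$ is the Pochhammer symbol. $\{s\}^c$ is $s$ repeated $c$ times if $c>0$ and empty otherwise. ${}_nt^{\star}_{N,a}(s_1,\dots,s_u)=\sum_{n\ge k_1\ge\cdots\ge k_u\ge0}\prod_{j}(Nk_j+a)^{-s_j}$, ${}_nt^{\star}_{N,a}(\emptyset)=1$. $\delta(0)=2$, $\delta(1)=1$, $\delta(c)=0$ for $c\ge3$. $\triangle(k,m)=0$ if $k=m$, $1$ otherwise. For an index $\boldsymbol{s}=(s_1,\dots,s_u)$ of positive integers and integers $k,m$: $W_{k,m}^{\#}(\boldsymbol{s})=\sum_{k\ge l_1\ge\cdots\ge l_u\ge m}2^{\triangle(k,l_1)+\triangle(l_1,l_2)+\cdots+\triangle(l_u,m)}\prod_j(Nl_j+a)^{-s_j}$ if $\boldsymbol{s}$ is nonempty and $k\ge m$, and $W_{k,m}^{\#}(\boldsymbol{s})=2^{\triangle(k,m)}$ otherwise. *)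

theory Defs
  imports Complex_Main
begin

definition dchains :: "'a::linorder \<Rightarrow> 'a \<Rightarrow> nat \<Rightarrow> 'a list set" where
  "dchains hi lo u = {l. length l = u \<and> sorted_wrt (\<ge>) l \<and> (\<forall>x\<in>set l. lo \<le> x \<and> x \<le> hi)}"

definition tstar :: "nat \<Rightarrow> int \<Rightarrow> int \<Rightarrow> nat list \<Rightarrow> real" where
  "tstar n N a s = (\<Sum>k\<in>dchains (int n) 0 (length s).
      \<Prod>j<length s. 1 / (real_of_int (N * k!j + a)) ^ (s!j))"

definition tri :: "int \<Rightarrow> int \<Rightarrow> nat" where
  "tri k m = (if k = m then 0 else 1)"

definition tri_sum :: "int list \<Rightarrow> nat" where
  "tri_sum xs = (\<Sum>(x,y)\<leftarrow>zip xs (tl xs). tri x y)"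

definition Wsharp :: "int \<Rightarrow> int \<Rightarrow> int \<Rightarrow> int \<Rightarrow> nat list \<Rightarrow> real" where
  "Wsharp N a k m s = (if s \<noteq> [] \<and> k \<ge> m then
      (\<Sum>l\<in>dchains k m (length s).
         2 ^ tri_sum (k # l @ [m]) * (\<Prod>j<length s. 1 / (real_of_int (N * l!j + a)) ^ (s!j)))
    else 2 ^ tri k m)"

text \<open>delta(0)=2, delta(1)=1, delta(c)=0 for c>=3 (delta(2) is never used; set to 0).\<close>
definition delta :: "nat \<Rightarrow> nat" where
  "delta c = (if c = 0 then 2 else if c = 1 then 1 else 0)"

end

theory Submission
  imports Defs
begin



lemma dchains_0: "dchains hi lo 0 = {[]}"
  by (auto simp: dchains_def)

lemma dchains_Suc: "dchains hi lo (Suc u) = (\<Union>x\<in>{lo..hi}. (\<lambda>l. x # l) ` dchains x lo u)"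
  by (auto simp: dchains_def length_Suc_conv image_iff; fastforce)

lemma finite_dchains:
  assumes "finite {lo..hi}" shows "finite (dchains hi lo u)"
proof -
  have "dchains hi lo u \<subseteq> {l. set l \<subseteq> {lo..hi} \<and> length l = u}"
    by (auto simp: dchains_def)
  thus ?thesis using finite_lists_length_eq[OF assms] finite_subset by blast
qed

lemma sum_dchains_Suc:
  fixes hi lo :: "'a::linorder"
  assumes "finite {lo..hi}"
  shows "(\<Sum>l\<in>dchains hi lo (Suc u). f l) = (\<Sum>x\<in>{lo..hi}. \<Sum>l\<in>dchains x lo u. f (x#l))"
proof -
  have fin: "\<And>x. x \<in> {lo..hi} \<Longrightarrow> finite (dchains x lo u)"
    by (rule finite_dchains, rule finite_subset[OF _ assms]) auto
  have "(\<Sum>l\<in>dchains hi lo (Suc u). f l) = (\<Sum>x\<in>{lo..hi}. \<Sum>l\<in>(\<lambda>l. x # l) ` dchains x lo u. f l)"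
    unfolding dchains_Suc
    by (rule sum.UNION_disjoint) (use assms fin in auto)
  also have "\<dots> = (\<Sum>x\<in>{lo..hi}. \<Sum>l\<in>dchains x lo u. f (x#l))"
    by (rule sum.cong[OF refl], subst sum.reindex) (auto simp: inj_on_def)
  finally show ?thesis .
qed

lemma tstar_Nil: "tstar n N a [] = 1"
  by (simp add: tstar_def dchains_0)

lemma int_atLeastAtMost_image: "{0..int n} = int ` {..n}"
  by (auto simp: image_iff intro!: bexI[of _ "nat x" for x])

lemma tstar_Cons: "tstar n N a (s#ss) =
   (\<Sum>m\<le>n. 1 / (real_of_int (N * int m + a)) ^ s * tstar m N a ss)"
proof -
  have "tstar n N a (s#ss) = (\<Sum>x\<in>{0..int n}. \<Sum>l\<in>dchains x 0 (length ss).
      1 / (real_of_int (N * x + a)) ^ s * (\<Prod>j<length ss. 1 / (real_of_int (N * l!j + a)) ^ (ss!j)))"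
    unfolding tstar_def by (simp add: sum_dchains_Suc prod.lessThan_Suc_shift del: prod.lessThan_Suc)
  also have "\<dots> = (\<Sum>m\<le>n. \<Sum>l\<in>dchains (int m) 0 (length ss).
      1 / (real_of_int (N * int m + a)) ^ s * (\<Prod>j<length ss. 1 / (real_of_int (N * l!j + a)) ^ (ss!j)))"
    unfolding int_atLeastAtMost_image by (subst sum.reindex) auto
  also have "\<dots> = (\<Sum>m\<le>n. 1 / (real_of_int (N * int m + a)) ^ s * tstar m N a ss)"
    unfolding tstar_def by (simp add: sum_distrib_left)
  finally show ?thesis .
qed

lemma tri_sum_Cons2: "tri_sum (x # y # zs) = tri x y + tri_sum (y # zs)"
  by (simp add: tri_sum_def)

lemma Wsharp_alt:
  assumes "m \<le> k"
  shows "Wsharp N a k m s = (\<Sum>l\<in>dchains k m (length s).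
         2 ^ tri_sum (k # l @ [m]) * (\<Prod>j<length s. 1 / (real_of_int (N * l!j + a)) ^ (s!j)))"
  using assms by (cases "s = []") (auto simp: Wsharp_def dchains_0 tri_sum_def)

lemma Wsharp_rep_Suc:
  assumes "m \<le> k"
  shows "Wsharp N a k m (replicate (Suc r) 1) =
     (\<Sum>l\<in>{m..k}. 2 ^ tri k l / real_of_int (N * l + a) * Wsharp N a l m (replicate r 1))"
proof -
  have "Wsharp N a k m (replicate (Suc r) 1) = (\<Sum>x\<in>{m..k}. \<Sum>l\<in>dchains x m r.
      2 ^ tri_sum (k # (x # l) @ [m]) * (\<Prod>j<Suc r. 1 / (real_of_int (N * (x#l)!j + a)) ^ (replicate (Suc r) 1!j)))"
    using assms by (simp add: Wsharp_alt sum_dchains_Suc del: replicate_Suc)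
  also have "\<dots> = (\<Sum>x\<in>{m..k}. \<Sum>l\<in>dchains x m r.
      2 ^ tri k x / real_of_int (N * x + a) * (2 ^ tri_sum (x # l @ [m]) * (\<Prod>j<r. 1 / (real_of_int (N * l!j + a)) ^ (replicate r 1!j))))"
    by (rule sum.cong[OF refl])+ (simp add: prod.lessThan_Suc_shift tri_sum_Cons2 power_add del: prod.lessThan_Suc replicate_Suc)
  also have "\<dots> = (\<Sum>l\<in>{m..k}. 2 ^ tri k l / real_of_int (N * l + a) * Wsharp N a l m (replicate r 1))"
    by (rule sum.cong[OF refl]) (simp add: Wsharp_alt sum_distrib_left)
  finally show ?thesis .
qed

lemma Wsharp_rep_0: "m \<le> k \<Longrightarrow> Wsharp N a k m (replicate 0 1) = 2 ^ tri k m"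
  by (simp add: Wsharp_def)




locale tc = fixes N a :: int assumes a1: "1 \<le> a" and aN: "a \<le> N"
begin

definition T :: "nat \<Rightarrow> real" where "T k = real_of_int (N * int k + a)"
definition x :: real where "x = real_of_int a / real_of_int N"
definition y :: real where "y = 2 * real_of_int a / real_of_int N"
definition F :: "nat \<Rightarrow> nat \<Rightarrow> real" where
  "F n k = real_of_int N * (pochhammer x (n+1))^2 / (fact (n - k) * pochhammer y (n + k + 1))"
definition P :: "nat \<Rightarrow> real" where "P k = pochhammer y k / (fact k * T k)"

lemma Npos: "real_of_int N > 0" using a1 aN by simp
lemma x_pos: "x > 0" using a1 aN unfolding x_def by simp
lemma y_pos: "y > 0" using a1 aN unfolding y_def by simp
lemma y_x: "y = 2 * x" unfolding x_def y_def by simp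
lemma T_eq: "T k = real_of_int N * (real k + x)"
  using Npos unfolding T_def x_def by (simp add: field_simps)
lemma T_pos: "T k > 0" using Npos x_pos by (simp add: T_eq)
lemma T_nz[simp]: "T k \<noteq> 0" using T_pos by (metis less_irrefl)
lemma px_pos: "pochhammer x k > 0" using x_pos by (simp add: pochhammer_pos)
lemma py_pos: "pochhammer y k > 0" using y_pos by (simp add: pochhammer_pos)
lemma py_nz[simp]: "pochhammer y k \<noteq> 0" using py_pos by (metis less_irrefl)
lemma px_nz[simp]: "pochhammer x k \<noteq> 0" using px_pos by (metis less_irrefl)
lemma N_nz[simp]: "real_of_int N \<noteq> 0" using Npos by simp

lemma R1:
  assumes "k \<le> n"
  shows "F n k * T (Suc n)^2 = F (Suc n) k * (T (Suc n)^2 - T k^2)"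
proof -
  obtain e where n: "n = k + e" using assms le_Suc_ex by blast
  define K where "K = N * (pochhammer x (n+1))^2 / (fact e * pochhammer y (n+k+1))"
  have f1: "F n k = K" unfolding F_def K_def using n by simp
  have f2: "F (Suc n) k = K * (x + real (n+1))^2 / ((real e + 1) * (y + real (n+k+1)))"
  proof -
    have p1: "pochhammer x (Suc n + 1) = pochhammer x (n+1) * (x + real (n+1))"
      using pochhammer_rec'[of x "n+1"] by (simp add: mult.commute)
    have p2: "pochhammer y (Suc n + k + 1) = pochhammer y (n+k+1) * (y + real (n+k+1))"
      using pochhammer_rec'[of y "n+k+1"] by (simp add: mult.commute)
    have f3: "fact (Suc n - k) = (fact e :: real) * (real e + 1)"
      using n by (simp add: Suc_diff_le algebra_simps)
    show ?thesis unfolding F_def K_def p1 p2 f3 using n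
      by (simp add: power_mult_distrib) (simp add: algebra_simps)
  qed
  have d1: "T (Suc n)^2 - T k^2 = N^2 * ((real e + 1) * (y + real (n+k+1)))"
    by (simp add: T_eq y_x n power2_eq_square algebra_simps)
  have d2: "T (Suc n)^2 = N^2 * (x + real (n+1))^2"
    by (simp add: T_eq power2_eq_square algebra_simps)
  have A0: "(real e + 1) * (y + real (n+k+1)) \<noteq> 0" using y_pos
    by (simp add: add_pos_nonneg)
  have "F (Suc n) k * (T (Suc n)^2 - T k^2) = K * (x + real (n+1))^2 / ((real e + 1) * (y + real (n+k+1))) * (N^2 * ((real e + 1) * (y + real (n+k+1))))"
    by (simp only: f2 d1)
  also have "\<dots> = K * (N^2 * (x + real (n+1))^2)" using A0 by (simp add: field_simps)
  also have "\<dots> = F n k * T (Suc n)^2" by (simp only: f1 d2)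
  finally show ?thesis by simp
qed

lemma R2:
  assumes "Suc i \<le> n"
  shows "F n (Suc i) * (T n + T (Suc i)) = F n i * (T n - T i)"
proof -
  obtain e where n: "n = Suc i + e" using assms le_Suc_ex by blast
  define K where "K = N * (pochhammer x (n+1))^2 / (fact e * pochhammer y (n+i+1))"
  have f1: "F n i = K / (real e + 1)" unfolding F_def K_def using n
    by (simp add: algebra_simps)
  have f2: "F n (Suc i) = K / (y + real (n+i+1))"
  proof -
    have p2: "pochhammer y (n + Suc i + 1) = pochhammer y (n+i+1) * (y + real (n+i+1))"
      using pochhammer_rec'[of y "n+i+1"] by (simp add: mult.commute)
    show ?thesis unfolding F_def K_def p2 using n by simp
  qed
  have d1: "T n + T (Suc i) = N * (y + real (n+i+1))"
    by (simp add: T_eq y_x algebra_simps)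
  have d2: "T n - T i = N * (real e + 1)"
    by (simp add: T_eq n algebra_simps)
  have "y + real (n+i+1) \<noteq> 0" using y_pos by (simp add: add_pos_nonneg)
  moreover have "real e + 1 \<noteq> 0" by simp
  ultimately show ?thesis unfolding f1 f2 d1 d2 by (simp add: field_simps)
qed

end



lemma sum_swap_tri:
  "(\<Sum>j\<in>{k..n::nat}. \<Sum>l\<in>{k..j}. g j l) = (\<Sum>l\<in>{k..n}. \<Sum>j\<in>{l..n}. g j l)"
proof -
  have "(\<Sum>j\<in>{k..n::nat}. \<Sum>l\<in>{k..j}. g j l) = (\<Sum>j\<in>{k..n}. \<Sum>l\<in>{l\<in>{k..n}. l \<le> j}. g j l)"
    by (rule sum.cong[OF refl], rule sum.cong) auto
  also have "\<dots> = (\<Sum>l\<in>{k..n}. \<Sum>j\<in>{j\<in>{k..n}. l \<le> j}. g j l)"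
    by (rule sum.swap_restrict) auto
  also have "\<dots> = (\<Sum>l\<in>{k..n}. \<Sum>j\<in>{l..n}. g j l)"
    by (rule sum.cong[OF refl], rule sum.cong) auto
  finally show ?thesis .
qed

lemma gl_insert: "k < (n::nat) \<Longrightarrow> {k<..n} = insert (Suc k) {Suc k<..n}" by auto
lemma cl_insert: "k \<le> (n::nat) \<Longrightarrow> {k..n} = insert k {k<..n}" by auto

context tc begin

lemma R1': "k \<le> n \<Longrightarrow> F n k = F (Suc n) k * (T (Suc n)^2 - T k^2) / T (Suc n)^2"
  using R1[of k n] by (simp add: field_simps)

lemma U: "k \<le> n \<Longrightarrow> (\<Sum>j\<in>{k<..n}. F n j * T j) = F n k * (T n - T k) / 2"
proof -
  have "\<forall>k. k + d = n \<longrightarrow> (\<Sum>j\<in>{k<..n}. F n j * T j) = F n k * (T n - T k) / 2" for d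
  proof (induction d)
    case 0 thus ?case by simp
  next
    case (Suc d)
    show ?case
    proof (intro allI impI)
      fix k assume kd: "k + Suc d = n"
      have "(\<Sum>j\<in>{k<..n}. F n j * T j) = F n (Suc k) * T (Suc k) + F n (Suc k) * (T n - T (Suc k)) / 2"
        using kd Suc.IH[rule_format, of "Suc k"] by (simp add: gl_insert)
      also have "\<dots> = F n (Suc k) * (T n + T (Suc k)) / 2" by (simp add: field_simps)
      also have "\<dots> = F n k * (T n - T k) / 2" using R2[of k n] kd by simp
      finally show "(\<Sum>j\<in>{k<..n}. F n j * T j) = F n k * (T n - T k) / 2" .
    qed
  qed
  moreover assume "k \<le> n"
  ultimately show ?thesis using le_add_diff_inverse by blast
qed

lemma V: "k \<le> n \<Longrightarrow> (\<Sum>j\<in>{k<..n}. (-1)^j * F n j) = (-1)^k * F n k * (T k / T n - 1) / 2"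
proof -
  have "\<forall>k. k + d = n \<longrightarrow> (\<Sum>j\<in>{k<..n}. (-1)^j * F n j) = (-1)^k * F n k * (T k / T n - 1) / 2" for d
  proof (induction d)
    case 0 thus ?case by simp
  next
    case (Suc d)
    show ?case
    proof (intro allI impI)
      fix k assume kd: "k + Suc d = n"
      have "(\<Sum>j\<in>{k<..n}. (-1)^j * F n j) = (-1)^Suc k * F n (Suc k) + (-1)^Suc k * F n (Suc k) * (T (Suc k) / T n - 1) / 2"
        using kd Suc.IH[rule_format, of "Suc k"] by (simp add: gl_insert)
      also have "\<dots> = - ((-1)^k * (F n (Suc k) * (T n + T (Suc k))) / (2 * T n))" by (simp add: field_simps)
      also have "\<dots> = - ((-1)^k * (F n k * (T n - T k)) / (2 * T n))" using R2[of k n] kd by simp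
      also have "\<dots> = (-1)^k * F n k * (T k / T n - 1) / 2" by (simp add: field_simps)
      finally show "(\<Sum>j\<in>{k<..n}. (-1)^j * F n j) = (-1)^k * F n k * (T k / T n - 1) / 2" .
    qed
  qed
  moreover assume "k \<le> n"
  ultimately show ?thesis using le_add_diff_inverse by blast
qed

lemma tri_gt: "k < j \<Longrightarrow> tri (int j) (int k) = 1" by (simp add: tri_def)

lemma U': assumes "k \<le> n" shows "(\<Sum>j\<in>{k..n}. F n j * T j * 2 ^ tri (int j) (int k)) = F n k * T n"
proof -
  have "(\<Sum>j\<in>{k..n}. F n j * T j * 2 ^ tri (int j) (int k)) = F n k * T k + 2 * (\<Sum>j\<in>{k<..n}. F n j * T j)"
    using assms by (simp add: cl_insert tri_def sum_distrib_left mult.commute)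
  thus ?thesis using U[OF assms] by (simp add: field_simps)
qed

lemma V': assumes "k \<le> n" shows "(\<Sum>j\<in>{k..n}. (-1)^j * F n j * 2 ^ tri (int j) (int k)) = (-1)^k * F n k * T k / T n"
proof -
  have "(\<Sum>j\<in>{k..n}. (-1)^j * F n j * 2 ^ tri (int j) (int k)) = (-1)^k * F n k + 2 * (\<Sum>j\<in>{k<..n}. (-1)^j * F n j)"
    using assms by (simp add: cl_insert tri_def sum_distrib_left mult.commute)
  thus ?thesis using V[OF assms] by (simp add: field_simps)
qed

definition Wr :: "nat \<Rightarrow> nat \<Rightarrow> nat \<Rightarrow> real" where
  "Wr j k r = Wsharp N a (int j) (int k) (replicate r 1)"

lemma int_img_cc: "{int k..int j} = int ` {k..j}"
  by (simp add: image_int_atLeastAtMost)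

lemma Wr_Suc: "k \<le> j \<Longrightarrow> Wr j k (Suc r) = (\<Sum>l\<in>{k..j}. 2 ^ tri (int j) (int l) / T l * Wr l k r)"
proof -
  assume kj: "k \<le> j"
  have "Wr j k (Suc r) = (\<Sum>l\<in>{int k..int j}. 2 ^ tri (int j) l / real_of_int (N * l + a) * Wsharp N a l (int k) (replicate r 1))"
    unfolding Wr_def using kj by (intro Wsharp_rep_Suc) simp
  also have "\<dots> = (\<Sum>l\<in>{k..j}. 2 ^ tri (int j) (int l) / T l * Wr l k r)"
    unfolding int_img_cc by (subst sum.reindex) (auto simp: Wr_def T_def)
  finally show ?thesis .
qed

lemma Wr_0: "k \<le> j \<Longrightarrow> Wr j k 0 = 2 ^ tri (int j) (int k)"
  unfolding Wr_def by (simp add: Wsharp_def)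

lemma Wr_diag: "Wr k k r = 1 / T k ^ r"
  by (induction r) (simp_all add: Wr_0 Wr_Suc tri_def)

lemma E: "k \<le> n \<Longrightarrow> (\<Sum>j\<in>{k..n}. F n j * (-1)^j * Wr j k r) = (-1)^k * T k * F n k / T n^(r+1)"
proof (induction r)
  case 0
  then show ?case using V'[OF 0] by (simp add: Wr_0 mult_ac)
next
  case (Suc r)
  have "(\<Sum>j\<in>{k..n}. F n j * (-1)^j * Wr j k (Suc r)) =
        (\<Sum>j\<in>{k..n}. \<Sum>l\<in>{k..j}. Wr l k r / T l * ((-1)^j * F n j * 2 ^ tri (int j) (int l)))"
    by (rule sum.cong[OF refl]) (simp add: Wr_Suc sum_distrib_left mult_ac)
  also have "\<dots> = (\<Sum>l\<in>{k..n}. Wr l k r / T l * (\<Sum>j\<in>{l..n}. (-1)^j * F n j * 2 ^ tri (int j) (int l)))"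
    by (simp add: sum_swap_tri sum_distrib_left)
  also have "\<dots> = (\<Sum>l\<in>{k..n}. F n l * (-1)^l * Wr l k r) / T n"
    unfolding sum_divide_distrib by (rule sum.cong[OF refl]) (simp add: V')
  also have "\<dots> = (-1)^k * T k * F n k / T n^(Suc r+1)"
    using Suc by simp
  finally show ?case .
qed

end



context tc begin

lemma T2: "k \<le> n \<Longrightarrow> (\<Sum>m\<in>{k..n}. F m k / T m ^ 2) = F n k / T k ^ 2"
proof (induction n rule: dec_induct)
  case base thus ?case by simp
next
  case (step n)
  have "(\<Sum>m\<in>{k..Suc n}. F m k / T m ^ 2) = F n k / T k ^ 2 + F (Suc n) k / T (Suc n) ^ 2"
    using step by simp
  also have "\<dots> = F (Suc n) k / T k ^ 2"
    unfolding R1'[OF step(1)] by (simp add: field_simps)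
  finally show ?case .
qed

lemma T1: "k \<le> n \<Longrightarrow> (\<Sum>m\<in>{k..n}. F m k / T m) = (\<Sum>j\<in>{k..n}. F n j / T j * 2 ^ tri (int j) (int k))"
proof (induction n rule: dec_induct)
  case base thus ?case by (simp add: tri_def)
next
  case (step n)
  define S1 where "S1 = (\<Sum>j\<in>{k..n}. F (Suc n) j / T j * 2 ^ tri (int j) (int k))"
  define S2 where "S2 = (\<Sum>j\<in>{k..n}. F (Suc n) j * T j * 2 ^ tri (int j) (int k))"
  define t where "t = F (Suc n) (Suc n) * T (Suc n) * 2 ^ tri (int (Suc n)) (int k)"
  have A: "(\<Sum>j\<in>{k..n}. F n j / T j * 2 ^ tri (int j) (int k)) = S1 - S2 / T (Suc n)^2"
    unfolding S1_def S2_def sum_divide_distrib sum_subtractf[symmetric]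
    by (rule sum.cong[OF refl]) (simp add: R1'[of _ n] field_simps power2_eq_square)
  have B: "S2 + t = F (Suc n) k * T (Suc n)"
    using U'[of k "Suc n"] step(1) unfolding S2_def t_def by simp
  have C: "(\<Sum>j\<in>{k..Suc n}. F (Suc n) j / T j * 2 ^ tri (int j) (int k)) = S1 + t / T (Suc n)^2"
    using step(1) unfolding S1_def t_def by (simp add: power2_eq_square)
  have "(\<Sum>j\<in>{k..Suc n}. F (Suc n) j / T j * 2 ^ tri (int j) (int k))
      = (\<Sum>j\<in>{k..n}. F n j / T j * 2 ^ tri (int j) (int k)) + (S2 + t) / T (Suc n)^2"
    using A C by (simp add: field_simps)
  also have "\<dots> = (\<Sum>m\<in>{k..n}. F m k / T m) + F (Suc n) k / T (Suc n)"
    unfolding step(3) B by (simp add: power2_eq_square)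
  also have "\<dots> = (\<Sum>m\<in>{k..Suc n}. F m k / T m)"
    using step(1) by simp
  finally show ?case by simp
qed

lemma T3: "k \<le> n \<Longrightarrow> (\<Sum>j\<in>{k..n}. F n j * (-1)^j / T j^2 * Wr j k r) = (-1)^k * T k * (\<Sum>m\<in>{k..n}. F m k / T m^(r+3))"
proof (induction n rule: dec_induct)
  case base thus ?case by (simp add: Wr_diag field_simps power2_eq_square power_add eval_nat_numeral)
next
  case (step n)
  define S1 where "S1 = (\<Sum>j\<in>{k..n}. F (Suc n) j * (-1)^j / T j^2 * Wr j k r)"
  define S2 where "S2 = (\<Sum>j\<in>{k..n}. F (Suc n) j * (-1)^j * Wr j k r)"
  define t where "t = F (Suc n) (Suc n) * (-1)^(Suc n) * Wr (Suc n) k r"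
  have A: "(\<Sum>j\<in>{k..n}. F n j * (-1)^j / T j^2 * Wr j k r) = S1 - S2 / T (Suc n)^2"
    unfolding S1_def S2_def sum_divide_distrib sum_subtractf[symmetric]
    by (rule sum.cong[OF refl]) (simp add: R1'[of _ n] field_simps power2_eq_square)
  have B: "S2 + t = (-1)^k * T k * F (Suc n) k / T (Suc n)^(r+1)"
    using E[of k "Suc n" r] step(1) unfolding S2_def t_def by simp
  have C: "(\<Sum>j\<in>{k..Suc n}. F (Suc n) j * (-1)^j / T j^2 * Wr j k r) = S1 + t / T (Suc n)^2"
    using step(1) unfolding S1_def t_def by simp
  have "(\<Sum>j\<in>{k..Suc n}. F (Suc n) j * (-1)^j / T j^2 * Wr j k r)
      = (\<Sum>j\<in>{k..n}. F n j * (-1)^j / T j^2 * Wr j k r) + (S2 + t) / T (Suc n)^2"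
    using A C by (simp add: field_simps)
  also have "\<dots> = (-1)^k * T k * (\<Sum>m\<in>{k..n}. F m k / T m^(r+3)) + (-1)^k * T k * (F (Suc n) k / T (Suc n)^(r+3))"
    unfolding step(3) B by (simp add: field_simps power_add eval_nat_numeral)
  also have "\<dots> = (-1)^k * T k * (\<Sum>m\<in>{k..Suc n}. F m k / T m^(r+3))"
    using step(1) by (simp add: distrib_left)
  finally show ?case .
qed

end



context tc begin

lemma key_alg:
  fixes M A B X Y D :: real
  assumes "M > 0" "A > 0" "B > 0" "D > 0" "D = Y + M + B" "M = A + B" "Y = 2 * X"
  shows "1 / (2 * M * A) - (B + X) / (A * D * B) = - ((Y + B) / (2 * M * B * D))"
proof -
  have p: "B * D - 2 * M * (B + X) = - A * (Y + B)"
    by (simp add: assms(5,6,7) algebra_simps)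
  have "1 / (2 * M * A) - (B + X) / (A * D * B) = (B * D - 2 * M * (B + X)) / (2 * M * A * B * D)"
    using assms(1-4) by (simp add: field_simps)
  also have "\<dots> = - ((Y + B) / (2 * M * B * D))"
    unfolding p using assms(1-4) by (simp add: field_simps)
  finally show ?thesis .
qed

definition Zt :: "nat \<Rightarrow> nat \<Rightarrow> real" where
  "Zt m k = F m k * (-1)^k * pochhammer y k * T k / fact k"

lemma Zp: "j < m \<Longrightarrow> (\<Sum>k\<le>j. Zt m k) = N^2 * (pochhammer x (m+1))^2 *
   ((-1)^j * pochhammer y (j+1) / (2 * real m * fact j * fact (m - j - 1) * pochhammer y (m+j+1)))"
proof (induction j)
  case 0
  then obtain m' where m: "m = Suc m'" by (cases m) auto
  define p where "p = pochhammer y (Suc m)"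
  have fm: "fact m = real m * (fact m' :: real)" using m by simp
  have D: "p > 0" unfolding p_def by (rule py_pos)
  have mp: "real m > 0" using m by simp
  have e1: "m - 0 - 1 = m'" "m - 0 = m" "m + 0 + 1 = Suc m" "m - Suc 0 = m'" using m by auto
  have "(\<Sum>k\<le>0. Zt m k) = N * (pochhammer x (m+1))^2 / (real m * fact m' * p) * (N * x)"
    unfolding Zt_def F_def p_def by (simp add: T_eq fm)
  also have "\<dots> = N^2 * (pochhammer x (m+1))^2 * (pochhammer y 1 / (2 * real m * fact 0 * fact (m - 0 - 1) * pochhammer y (m+0+1)))"
    unfolding e1 p_def[symmetric] using D mp x_pos by (simp add: y_x field_simps power2_eq_square e1)
  finally show ?case by simp
next
  case (Suc j)
  define e where "e = m - j - 2"
  have m: "m = j + 2 + e" using Suc.prems unfolding e_def by simp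
  define Q where "Q = N^2 * (pochhammer x (m+1))^2 * (-1)^j * pochhammer y (j+1) / (fact j * fact e * pochhammer y (m+j+1))"
  have h1: "pochhammer y (Suc j + 1) = pochhammer y (j+1) * (y + real (j+1))"
    using pochhammer_rec'[of y "j+1"] by (simp add: mult.commute)
  have h2: "pochhammer y (m + Suc j + 1) = pochhammer y (m+j+1) * (y + real (m+j+1))"
    using pochhammer_rec'[of y "m+j+1"] by (simp add: mult.commute)
  have h3: "m - j - 1 = Suc e" "m - Suc j - 1 = e" "m - Suc j = Suc e" using m by auto
  have c1: "N^2 * (pochhammer x (m+1))^2 *
   ((-1)^j * pochhammer y (j+1) / (2 * real m * fact j * fact (m - j - 1) * pochhammer y (m+j+1)))
     = Q / (2 * real m * (real e + 1))"
    unfolding Q_def h3 by (simp add: field_simps)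
  have c2: "Zt m (Suc j) = - Q * (real j + 1 + x) / ((real e + 1) * (y + real (m+j+1)) * (real j + 1))"
    unfolding Zt_def F_def Q_def h3 h2 by (simp add: T_eq field_simps power2_eq_square)
  have c3: "N^2 * (pochhammer x (m+1))^2 *
   ((-1)^Suc j * pochhammer y (Suc j+1) / (2 * real m * fact (Suc j) * fact (m - Suc j - 1) * pochhammer y (m+Suc j+1)))
     = - (Q * ((y + (real j + 1)) / (2 * real m * (real j + 1) * (y + real (m+j+1)))))"
    unfolding Q_def h3 h1 h2 by (simp add: divide_inverse inverse_mult_distrib mult_ac add_ac)
  have yp: "y + real (m+j+1) > 0" using y_pos by simp
  have mp: "real m > 0" using m by simp
  have key: "1 / (2 * real m * (real e + 1)) - (real j + 1 + x) / ((real e + 1) * (y + real (m+j+1)) * (real j + 1))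
      = - ((y + (real j + 1)) / (2 * real m * (real j + 1) * (y + real (m+j+1))))"
    by (rule key_alg[where X=x]) (use yp mp m y_x in auto)
  have "(\<Sum>k\<le>Suc j. Zt m k) = Q / (2 * real m * (real e + 1)) - Q * (real j + 1 + x) / ((real e + 1) * (y + real (m+j+1)) * (real j + 1))"
    using Suc c1 c2 by simp
  also have "\<dots> = Q * (1 / (2 * real m * (real e + 1)) - (real j + 1 + x) / ((real e + 1) * (y + real (m+j+1)) * (real j + 1)))"
    by (simp add: algebra_simps)
  also have "\<dots> = - (Q * ((y + (real j + 1)) / (2 * real m * (real j + 1) * (y + real (m+j+1)))))"
    unfolding key by simp
  finally show ?case using c3 by simp
qed

lemma Z: "1 \<le> m \<Longrightarrow> (\<Sum>k\<le>m. Zt m k) = 0"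
proof -
  assume "1 \<le> m"
  then obtain m' where m: "m = Suc m'" by (cases m) auto
  define Q where "Q = N^2 * (pochhammer x (m+1))^2 * (-1)^m' * pochhammer y (m'+1) / (fact m' * pochhammer y (m+m'+1))"
  have c1: "(\<Sum>k\<le>m'. Zt m k) = Q / (2 * (real m' + 1))"
    using Zp[of m' m] m unfolding Q_def by (simp add: field_simps)
  have h2: "pochhammer y (m + m + 1) = pochhammer y (m+m'+1) * (y + real (m+m'+1))"
    using pochhammer_rec'[of y "m+m'+1"] m by (simp add: mult.commute)
  have h1: "pochhammer y m = pochhammer y (m'+1)" using m by simp
  have fm: "fact m = (real m' + 1) * (fact m' :: real)" using m by (simp add: algebra_simps)
  have c2: "Zt m m = - Q * (real m' + 1 + x) / ((real m' + 1) * (y + real (m+m'+1)))"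
    unfolding Zt_def F_def Q_def h2 h1 fm using m by (simp add: T_eq field_simps power2_eq_square)
  have yp: "y + real (m+m'+1) = 2 * (real m' + 1 + x)" using m by (simp add: y_x)
  have xp: "real m' + 1 + x > 0" using x_pos by simp
  have "(\<Sum>k\<le>m. Zt m k) = Q / (2 * (real m' + 1)) - Q * (real m' + 1 + x) / ((real m' + 1) * (y + real (m+m'+1)))"
    using c1 c2 m by simp
  also have "\<dots> = Q / (2 * (real m' + 1)) - Q / (2 * (real m' + 1))"
    unfolding yp using xp by (simp add: divide_simps) (simp add: algebra_simps)
  also have "\<dots> = 0" by simp
  finally show ?thesis .
qed

lemma Bse: "(\<Sum>k\<le>n. F n k * (2 * (-1)^k * P k)) = 1"
proof (induction n)
  case 0 have "N \<noteq> 0" using a1 aN by simp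
  thus ?case unfolding F_def P_def using x_pos by (simp add: T_eq y_x power2_eq_square field_simps)
next
  case (Suc n)
  define u where "u k = 2 * (-1)^k * P k" for k
  have zz: "F m k * T k^2 * u k = 2 * Zt m k" for m k
    unfolding u_def Zt_def P_def by (simp add: field_simps power2_eq_square)
  have Zs: "(\<Sum>k\<le>Suc n. F (Suc n) k * T k^2 * u k) = 0"
    unfolding zz using Z[of "Suc n"] by (simp add: sum_distrib_left[symmetric])
  have A: "(\<Sum>k\<le>n. F n k * u k) = (\<Sum>k\<le>n. F (Suc n) k * u k) - (\<Sum>k\<le>n. F (Suc n) k * T k^2 * u k) / T (Suc n)^2"
    unfolding sum_divide_distrib sum_subtractf[symmetric]
    by (rule sum.cong[OF refl]) (simp add: R1'[of _ n] field_simps power2_eq_square)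
  have "(\<Sum>k\<le>Suc n. F (Suc n) k * u k) = (\<Sum>k\<le>n. F (Suc n) k * u k) + F (Suc n) (Suc n) * u (Suc n)" by simp
  also have "\<dots> = 1 + (\<Sum>k\<le>n. F (Suc n) k * T k^2 * u k) / T (Suc n)^2 + F (Suc n) (Suc n) * u (Suc n)"
    using A Suc unfolding u_def by simp
  also have "(\<Sum>k\<le>n. F (Suc n) k * T k^2 * u k) = - F (Suc n) (Suc n) * T (Suc n)^2 * u (Suc n)"
    using Zs by simp
  finally show ?case unfolding u_def by simp
qed

end



definition idx :: "nat \<Rightarrow> (nat \<Rightarrow> nat) \<Rightarrow> (nat \<Rightarrow> nat) \<Rightarrow> nat list" where
  "idx d c b = replicate (b 0) 2 @ concat (map (\<lambda>i. c i # replicate (b i) 2) [1..<d+1])"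

lemma idx_0: "idx 0 c b = replicate (b 0) 2"
  by (simp add: idx_def)

lemma idx_Suc: "idx (Suc d) c b = replicate (b 0) 2 @ c 1 # idx d (c \<circ> Suc) (b \<circ> Suc)"
proof -
  have "[1..<Suc d + 1] = 1 # map Suc [1..<d+1]"
    by (simp add: upt_conv_Cons map_Suc_upt del: upt_Suc)
  thus ?thesis by (simp add: idx_def comp_def)
qed

context tc begin

lemma tstar_Cons': "tstar n N a (s#ss) = (\<Sum>m\<le>n. 1 / T m ^ s * tstar m N a ss)"
  by (simp add: tstar_Cons T_def)

lemma swap0: "(\<Sum>m\<le>n. \<Sum>k\<le>m. g m k) = (\<Sum>k\<le>n. \<Sum>m\<in>{k..n}. g m (k::nat))"
  using sum_swap_tri[where k=0 and n=n and g=g] by (simp add: atMost_atLeast0)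

lemma rep2:
  assumes "\<And>m. tstar m N a s = (\<Sum>k\<le>m. F m k * g k)"
  shows "tstar n N a (replicate b 2 @ s) = (\<Sum>k\<le>n. F n k * (g k / T k ^ (2*b)))"
proof (induction b arbitrary: n)
  case 0 thus ?case using assms by simp
next
  case (Suc b)
  have "tstar n N a (replicate (Suc b) 2 @ s) = (\<Sum>m\<le>n. \<Sum>k\<le>m. 1 / T m ^ 2 * (F m k * (g k / T k ^ (2*b))))"
    by (simp add: tstar_Cons' Suc sum_distrib_left)
  also have "\<dots> = (\<Sum>k\<le>n. \<Sum>m\<in>{k..n}. 1 / T m ^ 2 * (F m k * (g k / T k ^ (2*b))))"
    by (rule swap0)
  also have "\<dots> = (\<Sum>k\<le>n. (g k / T k ^ (2*b)) * (\<Sum>m\<in>{k..n}. F m k / T m ^ 2))"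
    unfolding sum_distrib_left by (intro sum.cong refl) (simp add: mult_ac)
  also have "\<dots> = (\<Sum>k\<le>n. F n k * (g k / T k ^ (2*Suc b)))"
    by (rule sum.cong[OF refl]) (simp add: T2, simp add: field_simps power_add power2_eq_square)
  finally show ?case .
qed

lemma Tr:
  assumes "c = 1 \<or> c \<ge> 3"
  shows "(\<Sum>m\<le>n. 1 / T m ^ c * (\<Sum>k\<le>m. F m k * ((-1)^k / T k^2 * h k)))
   = (\<Sum>j\<le>n. F n j * ((-1)^(j*(1 + delta c)) / T j^(2 - delta c) *
        (\<Sum>k\<in>{0..j}. (-1)^(k*delta c) / T k^(3 - delta c) * Wr j k (c - 3) * h k)))"
proof -
  have L: "(\<Sum>m\<le>n. 1 / T m ^ c * (\<Sum>k\<le>m. F m k * ((-1)^k / T k^2 * h k)))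
     = (\<Sum>k\<le>n. (-1)^k / T k^2 * h k * (\<Sum>m\<in>{k..n}. F m k / T m ^ c))"
  proof -
    have "(\<Sum>m\<le>n. 1 / T m ^ c * (\<Sum>k\<le>m. F m k * ((-1)^k / T k^2 * h k)))
       = (\<Sum>m\<le>n. \<Sum>k\<le>m. 1 / T m ^ c * (F m k * ((-1)^k / T k^2 * h k)))"
      by (simp add: sum_distrib_left)
    also have "\<dots> = (\<Sum>k\<le>n. \<Sum>m\<in>{k..n}. 1 / T m ^ c * (F m k * ((-1)^k / T k^2 * h k)))"
      by (rule swap0)
    also have "\<dots> = (\<Sum>k\<le>n. (-1)^k / T k^2 * h k * (\<Sum>m\<in>{k..n}. F m k / T m ^ c))"
      unfolding sum_distrib_left by (intro sum.cong refl) (simp add: mult_ac)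
    finally show ?thesis .
  qed
  have R: "(\<Sum>j\<le>n. F n j * ((-1)^(j*(1 + delta c)) / T j^(2 - delta c) *
        (\<Sum>k\<in>{0..j}. (-1)^(k*delta c) / T k^(3 - delta c) * Wr j k (c - 3) * h k)))
     = (\<Sum>k\<le>n. (-1)^(k*delta c) / T k^(3 - delta c) * h k *
          (\<Sum>j\<in>{k..n}. F n j * (-1)^(j*(1 + delta c)) / T j^(2 - delta c) * Wr j k (c - 3)))"
  proof -
    have "(\<Sum>j\<le>n. F n j * ((-1)^(j*(1 + delta c)) / T j^(2 - delta c) *
        (\<Sum>k\<in>{0..j}. (-1)^(k*delta c) / T k^(3 - delta c) * Wr j k (c - 3) * h k)))
      = (\<Sum>j\<le>n. \<Sum>k\<le>j. F n j * ((-1)^(j*(1 + delta c)) / T j^(2 - delta c) *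
        ((-1)^(k*delta c) / T k^(3 - delta c) * Wr j k (c - 3) * h k)))"
      by (simp add: sum_distrib_left atMost_atLeast0)
    also have "\<dots> = (\<Sum>k\<le>n. \<Sum>j\<in>{k..n}. F n j * ((-1)^(j*(1 + delta c)) / T j^(2 - delta c) *
        ((-1)^(k*delta c) / T k^(3 - delta c) * Wr j k (c - 3) * h k)))"
      by (rule swap0)
    also have "\<dots> = (\<Sum>k\<le>n. (-1)^(k*delta c) / T k^(3 - delta c) * h k *
          (\<Sum>j\<in>{k..n}. F n j * (-1)^(j*(1 + delta c)) / T j^(2 - delta c) * Wr j k (c - 3)))"
      unfolding sum_distrib_left by (intro sum.cong refl) (simp add: mult_ac)
    finally show ?thesis .
  qed
  show ?thesis unfolding L R
  proof (rule sum.cong[OF refl])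
    fix k assume k: "k \<in> {..n}"
    hence kn: "k \<le> n" by simp
    show "(-1)^k / T k^2 * h k * (\<Sum>m\<in>{k..n}. F m k / T m ^ c) =
          (-1)^(k*delta c) / T k^(3 - delta c) * h k *
          (\<Sum>j\<in>{k..n}. F n j * (-1)^(j*(1 + delta c)) / T j^(2 - delta c) * Wr j k (c - 3))"
    proof (cases "c = 1")
      case True
      have "(\<Sum>j\<in>{k..n}. F n j * (-1)^(j*(1 + delta c)) / T j^(2 - delta c) * Wr j k (c - 3))
          = (\<Sum>j\<in>{k..n}. F n j / T j * 2 ^ tri (int j) (int k))"
        using True by (intro sum.cong[OF refl]) (simp add: delta_def Wr_0)
      thus ?thesis using True T1[OF kn] by (simp add: delta_def)
    next
      case False
      with assms have c3: "c \<ge> 3" by simp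
      then obtain r where r: "c = r + 3" by (metis add.commute le_Suc_ex)
      have dc: "delta (r+3) = 0" by (simp add: delta_def)
      have "(\<Sum>j\<in>{k..n}. F n j * (-1)^(j*(1 + delta c)) / T j^(2 - delta c) * Wr j k (c - 3))
          = (-1)^k * T k * (\<Sum>m\<in>{k..n}. F m k / T m^(r+3))"
        unfolding r dc using T3[OF kn, of r] by (simp add: mult_ac)
      thus ?thesis unfolding r dc by (simp add: eval_nat_numeral field_simps)
    qed
  qed
qed

end



definition ccd :: "nat \<Rightarrow> (nat \<Rightarrow> nat) \<Rightarrow> nat \<Rightarrow> nat" where
  "ccd d c i = (if i = 0 then 1 else if i \<le> d then c i else 0)"

context tc begin

definition top :: "nat \<Rightarrow> (nat \<Rightarrow> nat) \<Rightarrow> (nat \<Rightarrow> nat) \<Rightarrow> nat \<Rightarrow> real" where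
  "top d c b k = 2 * (-1)^(k*(1 + delta (ccd d c 1))) / T k ^ (2 * b 0 + 2 - delta (ccd d c 1))"

primrec Rf :: "nat \<Rightarrow> (nat \<Rightarrow> nat) \<Rightarrow> (nat \<Rightarrow> nat) \<Rightarrow> nat \<Rightarrow> real" where
  "Rf 0 c b k = P k"
| "Rf (Suc d) c b k = (\<Sum>k1\<in>{0..k}.
     (-1)^(k1*(delta (c 1) + delta (ccd (Suc d) c 2))) / T k1 ^ (2 * b 1 + 3 - (delta (c 1) + delta (ccd (Suc d) c 2)))
       * Wr k k1 (c 1 - 3) * Rf d (c \<circ> Suc) (b \<circ> Suc) k1)"

lemma neg3: "(-1::real)^(k + (k + k)) = (-1)^k"
proof -
  have "(-1::real)^(k + (k + k)) = (-1)^k * ((-1)^k * (-1)^k)" by (simp add: power_add)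
  also have "(-1::real)^k * (-1)^k = 1" by (simp add: power_add[symmetric])
  finally show ?thesis by simp
qed

lemma delta_le: "delta c \<le> 2" by (simp add: delta_def)
lemma delta_le1: "c \<ge> 1 \<Longrightarrow> delta c \<le> 1" by (simp add: delta_def)

lemma pow_combine:
  assumes "p + q = r + s"
  shows "1 / T k ^ p * (1 / T k ^ q) = 1 / T k ^ r * (1 / T k ^ s)"
proof -
  have "T k ^ p * T k ^ q = T k ^ r * T k ^ s" using assms by (simp add: power_add[symmetric])
  thus ?thesis by (simp add: field_simps)
qed

lemma M: "\<forall>c b n. (\<forall>i\<in>{1..d}. c i \<ge> 1 \<and> c i \<noteq> 2) \<longrightarrow>
   tstar n N a (idx d c b) = (\<Sum>k\<le>n. F n k * (top d c b k * Rf d c b k))"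
proof (induction d)
  case 0
  show ?case
  proof (intro allI impI)
    fix c b :: "nat \<Rightarrow> nat" and n :: nat
    have "tstar n N a (replicate (b 0) 2 @ []) = (\<Sum>k\<le>n. F n k * (2 * (-1)^k * P k / T k ^ (2 * b 0)))"
      by (rule rep2) (simp add: tstar_Nil Bse)
    also have "\<dots> = (\<Sum>k\<le>n. F n k * (top 0 c b k * Rf 0 c b k))"
      by (rule sum.cong[OF refl]) (simp add: top_def ccd_def delta_def neg3)
    finally show "tstar n N a (idx 0 c b) = (\<Sum>k\<le>n. F n k * (top 0 c b k * Rf 0 c b k))"
      by (simp add: idx_0)
  qed
next
  case (Suc d)
  show ?case
  proof (intro allI impI)
    fix c b :: "nat \<Rightarrow> nat" and n :: nat
    assume hc: "\<forall>i\<in>{1..Suc d}. c i \<ge> 1 \<and> c i \<noteq> 2"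
    define c' where "c' = c \<circ> Suc"
    define b' where "b' = b \<circ> Suc"
    have hc': "\<forall>i\<in>{1..d}. c' i \<ge> 1 \<and> c' i \<noteq> 2" using hc unfolding c'_def by auto
    have c1: "c 1 \<ge> 1" "c 1 \<noteq> 2" using hc by auto
    hence c13: "c 1 = 1 \<or> c 1 \<ge> 3" by auto
    define dl where "dl = delta (c 1)"
    define d2 where "d2 = delta (ccd (Suc d) c 2)"
    have d2': "delta (ccd d c' 1) = d2" unfolding d2_def c'_def ccd_def by (auto simp: numeral_2_eq_2)
    have dl1: "dl \<le> 1" unfolding dl_def by (rule delta_le1[OF c1(1)])
    have d22: "d2 \<le> 2" unfolding d2_def by (rule delta_le)
    define h where "h k = 2 * (-1)^(k*d2) * T k ^ 2 / T k ^ (2 * b' 0 + 2 - d2) * Rf d c' b' k" for k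
    have topeq: "top d c' b' k * Rf d c' b' k = (-1)^k / T k^2 * h k" for k
      unfolding top_def h_def d2' by (simp add: power_add distrib_left field_simps)
    have IH: "tstar m N a (idx d c' b') = (\<Sum>k\<le>m. F m k * ((-1)^k / T k^2 * h k))" for m
      using Suc.IH hc' by (simp add: topeq)
    define g where "g j = (-1)^(j*(1 + dl)) / T j^(2 - dl) *
        (\<Sum>k\<in>{0..j}. (-1)^(k*dl) / T k^(3 - dl) * Wr j k (c 1 - 3) * h k)" for j
    have gs: "tstar m N a (c 1 # idx d c' b') = (\<Sum>k\<le>m. F m k * g k)" for m
      unfolding tstar_Cons' IH g_def dl_def by (rule Tr[OF c13])
    have "tstar n N a (idx (Suc d) c b) = (\<Sum>k\<le>n. F n k * (g k / T k ^ (2 * b 0)))"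
      unfolding idx_Suc c'_def[symmetric] b'_def[symmetric] by (rule rep2[OF gs])
    also have "\<dots> = (\<Sum>k\<le>n. F n k * (top (Suc d) c b k * Rf (Suc d) c b k))"
    proof (rule sum.cong[OF refl])
      fix j
      have inner: "(-1)^(k*dl) / T k^(3 - dl) * Wr j k (c 1 - 3) * h k =
         2 * ((-1)^(k*(dl + d2)) / T k ^ (2 * b 1 + 3 - (dl + d2)) * Wr j k (c 1 - 3) * Rf d c' b' k)" for k
      proof -
        have e: "1 / T k ^ (3 - dl) * (1 / T k ^ (2 * b' 0 + 2 - d2)) = 1 / T k ^ (2 * b 1 + 3 - (dl + d2)) * (1 / T k ^ 2)"
          by (rule pow_combine) (use dl1 d22 in \<open>simp add: b'_def\<close>)
        have "(-1)^(k*dl) / T k^(3 - dl) * Wr j k (c 1 - 3) * h k =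
            2 * (-1)^(k*dl) * (-1)^(k*d2) * T k ^ 2 * (1 / T k ^ (3 - dl) * (1 / T k ^ (2 * b' 0 + 2 - d2))) * Wr j k (c 1 - 3) * Rf d c' b' k"
          unfolding h_def by (simp add: field_simps)
        also have "\<dots> = 2 * ((-1)^(k*(dl + d2)) / T k ^ (2 * b 1 + 3 - (dl + d2)) * Wr j k (c 1 - 3) * Rf d c' b' k)"
          unfolding e by (simp add: field_simps power_add distrib_left)
        finally show ?thesis .
      qed
      have outer: "(-1)^(j*(1 + dl)) / T j^(2 - dl) / T j ^ (2 * b 0) = (-1)^(j*(1 + dl)) / T j ^ (2 * b 0 + 2 - dl)"
        using dl1 by (simp add: power_add[symmetric] field_simps)
      have "g j / T j ^ (2 * b 0) = 2 * (-1)^(j*(1 + dl)) / T j ^ (2 * b 0 + 2 - dl) *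
          (\<Sum>k\<in>{0..j}. (-1)^(k*(dl + d2)) / T k ^ (2 * b 1 + 3 - (dl + d2)) * Wr j k (c 1 - 3) * Rf d c' b' k)"
      proof -
        have S: "(\<Sum>k\<in>{0..j}. (-1)^(k*dl) / T k^(3 - dl) * Wr j k (c 1 - 3) * h k) =
           2 * (\<Sum>k\<in>{0..j}. (-1)^(k*(dl + d2)) / T k ^ (2 * b 1 + 3 - (dl + d2)) * Wr j k (c 1 - 3) * Rf d c' b' k)"
          unfolding inner by (simp add: sum_distrib_left)
        have "g j / T j ^ (2 * b 0) = (-1)^(j*(1 + dl)) / T j^(2 - dl) / T j ^ (2 * b 0) *
           (2 * (\<Sum>k\<in>{0..j}. (-1)^(k*(dl + d2)) / T k ^ (2 * b 1 + 3 - (dl + d2)) * Wr j k (c 1 - 3) * Rf d c' b' k))"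
          by (simp only: g_def S) (simp add: divide_inverse mult_ac)
        thus ?thesis unfolding outer by (simp add: mult_ac)
      qed
      also have "\<dots> = top (Suc d) c b j * Rf (Suc d) c b j"
        unfolding top_def Rf.simps dl_def d2_def c'_def b'_def by (simp add: ccd_def)
      finally show "F n j * (g j / T j ^ (2 * b 0)) = F n j * (top (Suc d) c b j * Rf (Suc d) c b j)" by simp
    qed
    finally show "tstar n N a (idx (Suc d) c b) = (\<Sum>k\<le>n. F n k * (top (Suc d) c b k * Rf (Suc d) c b k))" .
  qed
qed

end



context tc begin

definition dlt :: "nat \<Rightarrow> (nat \<Rightarrow> nat) \<Rightarrow> nat \<Rightarrow> nat" where
  "dlt d c i = delta (ccd d c i) + delta (ccd d c (i+1))"

definition fac :: "nat \<Rightarrow> (nat \<Rightarrow> nat) \<Rightarrow> (nat \<Rightarrow> nat) \<Rightarrow> nat list \<Rightarrow> nat \<Rightarrow> real" where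
  "fac d c b k i = (-1) ^ (k!i * dlt d c i) /
            (real_of_int (N * int (k!i) + a)) ^ (2 * b i + 3 - dlt d c i)
          * Wsharp N a (if i = 0 then -1 else int (k!(i-1))) (int (k!i)) (replicate (ccd d c i - 3) 1)"

definition Rest :: "nat \<Rightarrow> (nat \<Rightarrow> nat) \<Rightarrow> (nat \<Rightarrow> nat) \<Rightarrow> nat list \<Rightarrow> real" where
  "Rest d c b k = pochhammer y (k!d) / (fact (k!d) * real_of_int (N * int (k!d) + a)) * (\<Prod>i\<in>{1..d}. fac d c b k i)"

lemma Rest_Suc: "Rest (Suc d) c b (k0 # k1 # l) = fac (Suc d) c b (k0 # k1 # l) 1 * Rest d (c \<circ> Suc) (b \<circ> Suc) (k1 # l)"
proof -
  have p: "(\<Prod>i\<in>{1..Suc d}. fac (Suc d) c b (k0 # k1 # l) i) =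
      fac (Suc d) c b (k0 # k1 # l) 1 * (\<Prod>i\<in>{1..d}. fac (Suc d) c b (k0 # k1 # l) (Suc i))"
  proof -
    have "prod (fac (Suc d) c b (k0 # k1 # l)) {1..Suc d} = fac (Suc d) c b (k0 # k1 # l) 1 * prod (fac (Suc d) c b (k0 # k1 # l)) {Suc 1..Suc d}"
      by (rule prod.atLeast_Suc_atMost) simp
    also have "prod (fac (Suc d) c b (k0 # k1 # l)) {Suc 1..Suc d} = (\<Prod>i\<in>{1..d}. fac (Suc d) c b (k0 # k1 # l) (Suc i))"
      by (rule prod.shift_bounds_cl_Suc_ivl)
    finally show ?thesis .
  qed
  have q: "fac (Suc d) c b (k0 # k1 # l) (Suc i) = fac d (c \<circ> Suc) (b \<circ> Suc) (k1 # l) i" if "i \<in> {1..d}" for i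
  proof -
    from that obtain i' where i: "i = Suc i'" by (cases i) auto
    show ?thesis using that unfolding fac_def dlt_def ccd_def i by auto
  qed
  have pq: "(\<Prod>i\<in>{1..d}. fac (Suc d) c b (k0 # k1 # l) (Suc i)) = (\<Prod>i\<in>{1..d}. fac d (c \<circ> Suc) (b \<circ> Suc) (k1 # l) i)"
    by (rule prod.cong[OF refl q])
  show ?thesis unfolding Rest_def p pq nth_Cons_Suc by (simp only: mult_ac)
qed

lemma Cl: "(\<Sum>k'\<in>dchains k0 0 d. Rest d c b (k0 # k')) = Rf d c b k0"
proof (induction d arbitrary: c b k0)
  case 0
  show ?case by (simp add: dchains_0 Rest_def P_def T_def)
next
  case (Suc d)
  have "(\<Sum>k'\<in>dchains k0 0 (Suc d). Rest (Suc d) c b (k0 # k')) =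
      (\<Sum>k1\<in>{0..k0}. \<Sum>l\<in>dchains k1 0 d. fac (Suc d) c b (k0 # k1 # l) 1 * Rest d (c \<circ> Suc) (b \<circ> Suc) (k1 # l))"
    by (simp add: sum_dchains_Suc Rest_Suc)
  also have "\<dots> = (\<Sum>k1\<in>{0..k0}. fac (Suc d) c b [k0, k1] 1 * Rf d (c \<circ> Suc) (b \<circ> Suc) k1)"
  proof (rule sum.cong[OF refl])
    fix k1
    have f1: "(\<Sum>l\<in>dchains k1 0 d. fac (Suc d) c b (k0 # k1 # l) 1 * Rest d (c \<circ> Suc) (b \<circ> Suc) (k1 # l)) =
        (\<Sum>l\<in>dchains k1 0 d. fac (Suc d) c b [k0, k1] 1 * Rest d (c \<circ> Suc) (b \<circ> Suc) (k1 # l))"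
      by (rule sum.cong[OF refl]) (simp add: fac_def)
    show "(\<Sum>l\<in>dchains k1 0 d. fac (Suc d) c b (k0 # k1 # l) 1 * Rest d (c \<circ> Suc) (b \<circ> Suc) (k1 # l)) =
        fac (Suc d) c b [k0, k1] 1 * Rf d (c \<circ> Suc) (b \<circ> Suc) k1"
      unfolding f1 sum_distrib_left[symmetric] Suc.IH by (rule refl)
  qed
  also have "\<dots> = Rf (Suc d) c b k0"
    unfolding Rf.simps
  proof (rule sum.cong[OF refl])
    fix k1
    have "fac (Suc d) c b [k0, k1] 1 = (-1)^(k1*(delta (c 1) + delta (ccd (Suc d) c 2))) / T k1 ^ (2 * b 1 + 3 - (delta (c 1) + delta (ccd (Suc d) c 2)))
       * Wr k0 k1 (c 1 - 3)"
    proof -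
      have c1: "ccd (Suc d) c 1 = c 1" by (simp add: ccd_def)
      have d1: "dlt (Suc d) c 1 = delta (c 1) + delta (ccd (Suc d) c 2)" unfolding dlt_def one_add_one c1 ..
      have n1: "[k0, k1] ! 1 = k1" "[k0, k1] ! (1 - 1) = k0" "((1::nat) = 0) = False" by simp_all
      show ?thesis unfolding fac_def d1 c1 n1 if_False Wr_def T_def by (rule refl)
    qed
    thus "fac (Suc d) c b [k0, k1] 1 * Rf d (c \<circ> Suc) (b \<circ> Suc) k1 =
      (-1)^(k1*(delta (c 1) + delta (ccd (Suc d) c 2))) / T k1 ^ (2 * b 1 + 3 - (delta (c 1) + delta (ccd (Suc d) c 2)))
       * Wr k0 k1 (c 1 - 3) * Rf d (c \<circ> Suc) (b \<circ> Suc) k1" by simp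
  qed
  finally show ?case .
qed

lemma RHS_eq: "(\<Sum>k\<in>dchains n 0 (d+1).
       real_of_int N * (pochhammer x (n+1))^2 /
         (fact (n - k!0) * pochhammer y (n + k!0 + 1))
       * (pochhammer y (k!d) / (fact (k!d) * real_of_int (N * int (k!d) + a)))
       * (\<Prod>i\<in>{0..d}. fac d c b k i)) = (\<Sum>k\<le>n. F n k * (top d c b k * Rf d c b k))"
proof -
  have t: "fac d c b (k0 # l) 0 = top d c b k0" for k0 l
    by (simp add: fac_def top_def dlt_def ccd_def T_def Wsharp_def tri_def delta_def)
  have "(\<Sum>k\<in>dchains n 0 (d+1).
       real_of_int N * (pochhammer x (n+1))^2 /
         (fact (n - k!0) * pochhammer y (n + k!0 + 1))
       * (pochhammer y (k!d) / (fact (k!d) * real_of_int (N * int (k!d) + a)))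
       * (\<Prod>i\<in>{0..d}. fac d c b k i))
     = (\<Sum>k0\<in>{0..n}. \<Sum>l\<in>dchains k0 0 d. F n k0 * (top d c b k0 * Rest d c b (k0 # l)))"
  proof -
    have G: "real_of_int N * (pochhammer x (n+1))^2 /
         (fact (n - (k0#l)!0) * pochhammer y (n + (k0#l)!0 + 1))
       * (pochhammer y ((k0#l)!d) / (fact ((k0#l)!d) * real_of_int (N * int ((k0#l)!d) + a)))
       * (\<Prod>i\<in>{0..d}. fac d c b (k0#l) i) = F n k0 * (top d c b k0 * Rest d c b (k0 # l))" for k0 l
    proof -
      have p0: "(\<Prod>i\<in>{0..d}. fac d c b (k0#l) i) = fac d c b (k0#l) 0 * (\<Prod>i\<in>{1..d}. fac d c b (k0#l) i)"
        using prod.atLeast_Suc_atMost[of 0 d "fac d c b (k0#l)"] by simp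
      show ?thesis unfolding p0 t F_def Rest_def nth_Cons_0 by (simp only: mult_ac)
    qed
    have "(\<Sum>k\<in>dchains n 0 (d+1).
       real_of_int N * (pochhammer x (n+1))^2 /
         (fact (n - k!0) * pochhammer y (n + k!0 + 1))
       * (pochhammer y (k!d) / (fact (k!d) * real_of_int (N * int (k!d) + a)))
       * (\<Prod>i\<in>{0..d}. fac d c b k i))
     = (\<Sum>k0\<in>{0..n}. \<Sum>l\<in>dchains k0 0 d. real_of_int N * (pochhammer x (n+1))^2 /
         (fact (n - (k0#l)!0) * pochhammer y (n + (k0#l)!0 + 1))
       * (pochhammer y ((k0#l)!d) / (fact ((k0#l)!d) * real_of_int (N * int ((k0#l)!d) + a)))
       * (\<Prod>i\<in>{0..d}. fac d c b (k0#l) i))"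
      unfolding Suc_eq_plus1[symmetric] by (rule sum_dchains_Suc) simp
    thus ?thesis unfolding G .
  qed
  also have "\<dots> = (\<Sum>k\<le>n. F n k * (top d c b k * Rf d c b k))"
    by (simp add: sum_distrib_left[symmetric] Cl atMost_atLeast0)
  finally show ?thesis .
qed

end

theorem mainTheorem4:
  fixes N a :: int and n d :: nat and c b :: "nat \<Rightarrow> nat"
  assumes "1 \<le> a" and "a \<le> N"
    and "\<forall>i\<in>{1..d}. c i \<ge> 1 \<and> c i \<noteq> 2"
  shows "tstar n N a (replicate (b 0) 2 @ concat (map (\<lambda>i. c i # replicate (b i) 2) [1..<d+1])) =
    (let cc = (\<lambda>i. if i = 0 then 1 else if i \<le> d then c i else 0);
         \<delta> = (\<lambda>i. delta (cc i) + delta (cc (i+1)));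
         x = real_of_int a / real_of_int N;
         y = 2 * real_of_int a / real_of_int N
     in (\<Sum>k\<in>dchains n 0 (d+1).
       real_of_int N * (pochhammer x (n+1))^2 /
         (fact (n - k!0) * pochhammer y (n + k!0 + 1))
       * (pochhammer y (k!d) / (fact (k!d) * real_of_int (N * int (k!d) + a)))
       * (\<Prod>i\<in>{0..d}. (-1) ^ (k!i * \<delta> i) /
            (real_of_int (N * int (k!i) + a)) ^ (2 * b i + 3 - \<delta> i)
          * Wsharp N a (if i = 0 then -1 else int (k!(i-1))) (int (k!i)) (replicate (cc i - 3) 1))))"
proof -
  interpret tc N a using assms(1,2) by unfold_locales
  have L: "tstar n N a (replicate (b 0) 2 @ concat (map (\<lambda>i. c i # replicate (b i) 2) [1..<d+1]))
     = (\<Sum>k\<le>n. F n k * (top d c b k * Rf d c b k))"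
    using M assms(3) unfolding idx_def by blast
  note R = RHS_eq[of n d c b, unfolded fac_def dlt_def ccd_def x_def y_def]
  show ?thesis
    unfolding Let_def L R[symmetric] by (rule refl)
qed



end
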